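(* Let $A^n, A^{n+1}$ be real $N\times N$ matrices satisfying condition (M), let $D=\mathrm{diag}(d_{11},\dots,d_{NN})$ with $d_{ii}>0$ and $\sum_i d_{ii}a^{n+1}_{ij}\ge0$ for every $j$, and let $B^n(\cdot),B^{n+1}(\cdot)$ be limiter-dependent matrices such that $\sum_i d_{ii}b^{n+1}_{ij}(\alpha)=0$ for all $j$ and all $\alpha$. Let $\sigma\in[0,1]$, $\gamma\in(0,1)$, set $s_j=d_{jj}+\Delta t\,\sigma\sum_i d_{ii}a^{n+1}_{ij}$, and let $\Delta t>0$ satisfy $$\Delta t\,\sigma\,\|DB^{n+1}(\mathbf 1)\|_1\le\gamma\min_j s_j .$$ Then for all $\alpha^n,\alpha^{n+1}\in[0,1]^{N-1}$ and all $y^n,g\in\mathbb R^N$ the matrix $E+\Delta t\,\sigma\left(A^{n+1}-B^{n+1}(\alpha^{n+1})\right)$ is invertible, and the solution $y^{n+1}$ of $$\left[E+\Delta t\,\sigma\left(A^{n+1}-B^{n+1}(\alpha^{n+1})\right)\right]y^{n+1}=\left[E-\Delta t(1-\sigma)\left(A^n-B^n(\alpha^n)\right)\right]y^n+\Delta t\,g$$ satisfies $$\|y^{n+1}\|_1\le M\left(M_1\|y^n\|_1+\Delta t\,\|g\|_1\right),\quad M=\frac{\|D\|_1}{(1-\gamma)\min_j s_j},\quad M_1=\|E-\Delta t(1-\sigma)A^n\|_1+\Delta t(1-\sigma)\|B^n(\mathbf 1)\|_1 .$$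
   Context: $E$ is the $N\times N$ identity. Condition (M) on a real $N\times N$ matrix $A=\{a_{ij}\}$: $a_{ii}\ge 0$ for all $i$ and $a_{ij}\le 0$ for all $i\ne j$. Norms: $\|y\|_1=\sum_i|y_i|$, $\|M\|_1=\max_j\sum_i|m_{ij}|$. A limiter-dependent matrix is a map $\alpha=(\alpha_1,\dots,\alpha_{N-1})\in\mathbb R^{N-1}\mapsto B(\alpha)=\{b_{ij}(\alpha)\}$ ($N\times N$) of the form $b_{ij}(\alpha)=\alpha_{\kappa(i,j)}\beta_{ij}$ for $i\ne j$ and $b_{ii}(\alpha)=-\sum_{j\ne i}b_{ij}(\alpha)$, where $\beta_{ij}\le0$ are fixed numbers and $\kappa(i,j)\in\{1,\dots,N-1\}$ are fixed indices. $\mathbf 1$ is the vector with all entries $1$. *)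

theory Defs
  imports Complex_Main
begin

text \<open>N x N real matrices are represented as functions nat => nat => real,
only indices i, j < N being relevant; vectors as nat => real with indices < N.
Limiter vectors alpha in R^(N-1) are functions nat => real indexed by 1..N-1.\<close>

type_synonym mat = "nat \<Rightarrow> nat \<Rightarrow> real"
type_synonym vec = "nat \<Rightarrow> real"

definition idm :: mat where "idm = (\<lambda>i j. if i = j then 1 else 0)"

definition diagm :: "vec \<Rightarrow> mat" where "diagm d = (\<lambda>i j. if i = j then d i else 0)"

definition madd :: "mat \<Rightarrow> mat \<Rightarrow> mat" where "madd A B = (\<lambda>i j. A i j + B i j)"
definition msub :: "mat \<Rightarrow> mat \<Rightarrow> mat" where "msub A B = (\<lambda>i j. A i j - B i j)"
definition mscale :: "real \<Rightarrow> mat \<Rightarrow> mat" where "mscale c A = (\<lambda>i j. c * A i j)"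

definition mmul :: "nat \<Rightarrow> mat \<Rightarrow> mat \<Rightarrow> mat" where
  "mmul N A B = (\<lambda>i j. \<Sum>k<N. A i k * B k j)"

definition mvec :: "nat \<Rightarrow> mat \<Rightarrow> vec \<Rightarrow> vec" where
  "mvec N A y = (\<lambda>i. \<Sum>k<N. A i k * y k)"

definition invertible_mat :: "nat \<Rightarrow> mat \<Rightarrow> bool" where
  "invertible_mat N A \<longleftrightarrow> (\<exists>C. \<forall>i<N. \<forall>j<N. mmul N A C i j = idm i j \<and> mmul N C A i j = idm i j)"

definition condM :: "nat \<Rightarrow> mat \<Rightarrow> bool" where
  "condM N A \<longleftrightarrow> (\<forall>i<N. A i i \<ge> 0) \<and> (\<forall>i<N. \<forall>j<N. i \<noteq> j \<longrightarrow> A i j \<le> 0)"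

definition vnorm1 :: "nat \<Rightarrow> vec \<Rightarrow> real" where "vnorm1 N y = (\<Sum>i<N. \<bar>y i\<bar>)"

definition mnorm1 :: "nat \<Rightarrow> mat \<Rightarrow> real" where
  "mnorm1 N M = Max ((\<lambda>j. \<Sum>i<N. \<bar>M i j\<bar>) ` {..<N})"

definition limmat :: "nat \<Rightarrow> mat \<Rightarrow> (nat \<Rightarrow> nat \<Rightarrow> nat) \<Rightarrow> vec \<Rightarrow> mat" where
  "limmat N \<beta> \<kappa> \<alpha> = (\<lambda>i j. if i \<noteq> j then \<alpha> (\<kappa> i j) * \<beta> i j
      else - (\<Sum>k\<in>{..<N} - {i}. \<alpha> (\<kappa> i k) * \<beta> i k))"

definition is_limmat_data :: "nat \<Rightarrow> mat \<Rightarrow> (nat \<Rightarrow> nat \<Rightarrow> nat) \<Rightarrow> bool" where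
  "is_limmat_data N \<beta> \<kappa> \<longleftrightarrow> (\<forall>i<N. \<forall>j<N. i \<noteq> j \<longrightarrow> \<beta> i j \<le> 0 \<and> \<kappa> i j \<in> {1..N-1})"

definition ones :: vec where "ones = (\<lambda>_. 1)"

end

theory Submission
  imports "Jordan_Normal_Form.Determinant" Defs
begin

lemma colsum_le: "j < N \<Longrightarrow> (\<Sum>i<N. \<bar>M i j\<bar>) \<le> mnorm1 N M"
  unfolding mnorm1_def by (rule Max_ge) auto

lemma mnorm_nonneg: "N \<ge> 1 \<Longrightarrow> 0 \<le> mnorm1 N M"
  by (rule order_trans[OF _ colsum_le[of 0]]) (auto intro: sum_nonneg)

lemma vnorm_nonneg: "0 \<le> vnorm1 N y"
  unfolding vnorm1_def by (auto intro: sum_nonneg)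

lemma mvec_norm: "vnorm1 N (mvec N M y) \<le> mnorm1 N M * vnorm1 N y"
proof -
  have "vnorm1 N (mvec N M y) \<le> (\<Sum>i<N. \<Sum>k<N. \<bar>M i k\<bar> * \<bar>y k\<bar>)"
    unfolding vnorm1_def mvec_def
    by (rule sum_mono) (rule order_trans[OF sum_abs], simp add: abs_mult)
  also have "\<dots> = (\<Sum>k<N. (\<Sum>i<N. \<bar>M i k\<bar>) * \<bar>y k\<bar>)"
    by (subst sum.swap) (simp add: sum_distrib_right)
  also have "\<dots> \<le> (\<Sum>k<N. mnorm1 N M * \<bar>y k\<bar>)"
    by (rule sum_mono) (auto intro: mult_right_mono colsum_le)
  also have "\<dots> = mnorm1 N M * vnorm1 N y" by (simp add: vnorm1_def sum_distrib_left)
  finally show ?thesis .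
qed

lemma mnorm_mono:
  assumes "N \<ge> 1" "\<forall>i<N. \<forall>j<N. \<bar>M i j\<bar> \<le> \<bar>M' i j\<bar>"
  shows "mnorm1 N M \<le> mnorm1 N M'"
proof -
  have "\<forall>x\<in>(\<lambda>j. \<Sum>i<N. \<bar>M i j\<bar>) ` {..<N}. x \<le> mnorm1 N M'"
  proof
    fix x assume "x \<in> (\<lambda>j. \<Sum>i<N. \<bar>M i j\<bar>) ` {..<N}"
    then obtain j where j: "j < N" and x: "x = (\<Sum>i<N. \<bar>M i j\<bar>)" by auto
    have "(\<Sum>i<N. \<bar>M i j\<bar>) \<le> (\<Sum>i<N. \<bar>M' i j\<bar>)" using j assms by (auto intro: sum_mono)
    also have "\<dots> \<le> mnorm1 N M'" using j by (rule colsum_le)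
    finally show "x \<le> mnorm1 N M'" using x by simp
  qed
  moreover have "0 \<in> {..<N}" using assms(1) by simp
  hence "(\<lambda>j. \<Sum>i<N. \<bar>M i j\<bar>) ` {..<N} \<noteq> {}" by blast
  ultimately show ?thesis unfolding mnorm1_def[of N M] by (subst Max_le_iff) auto
qed

lemma Mmat_lower:
  assumes off: "\<forall>i<N. \<forall>j<N. i \<noteq> j \<longrightarrow> K i j \<le> 0"
  shows "(\<Sum>j<N. (\<Sum>i<N. K i j) * \<bar>y j\<bar>) \<le> vnorm1 N (mvec N K y)"
proof -
  have row: "(\<Sum>j<N. K i j * \<bar>y j\<bar>) \<le> \<bar>mvec N K y i\<bar>" if i: "i < N" for i
  proof -
    have "(\<Sum>j<N. K i j * \<bar>y j\<bar>) \<le> (\<Sum>j<N. K i j * (sgn (y i) * y j))"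
    proof (rule sum_mono)
      fix j assume j: "j \<in> {..<N}"
      show "K i j * \<bar>y j\<bar> \<le> K i j * (sgn (y i) * y j)"
      proof (cases "i = j")
        case True thus ?thesis by (simp add: sgn_mult_self_eq abs_sgn mult.commute)
      next
        case False
        hence "K i j \<le> 0" using off i j by auto
        moreover have "sgn (y i) * y j \<le> \<bar>y j\<bar>"
          by (cases "y i > 0"; cases "y i < 0") (auto simp: sgn_if)
        ultimately show ?thesis by (simp add: mult_left_mono_neg)
      qed
    qed
    also have "\<dots> = sgn (y i) * mvec N K y i"
      by (simp add: mvec_def sum_distrib_left algebra_simps)
    also have "\<dots> \<le> \<bar>mvec N K y i\<bar>"
      by (cases "y i > 0"; cases "y i < 0") (auto simp: sgn_if)
    finally show ?thesis .
  qed
  have "(\<Sum>j<N. (\<Sum>i<N. K i j) * \<bar>y j\<bar>) = (\<Sum>i<N. \<Sum>j<N. K i j * \<bar>y j\<bar>)"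
    by (subst sum.swap) (simp add: sum_distrib_right)
  also have "\<dots> \<le> vnorm1 N (mvec N K y)" unfolding vnorm1_def
    by (rule sum_mono) (use row in auto)
  finally show ?thesis .
qed

lemma limmat_bound:
  assumes dat: "is_limmat_data N \<beta> \<kappa>"
    and al: "\<forall>k\<in>{1..N-1}. 0 \<le> \<alpha> k \<and> \<alpha> k \<le> 1"
    and i: "i < N" and j: "j < N"
  shows "\<bar>limmat N \<beta> \<kappa> \<alpha> i j\<bar> \<le> \<bar>limmat N \<beta> \<kappa> ones i j\<bar>"
proof -
  have b: "\<beta> i k \<le> 0 \<and> 0 \<le> \<alpha> (\<kappa> i k) \<and> \<alpha> (\<kappa> i k) \<le> 1" if "k < N" "i \<noteq> k" for k
    using dat al that i unfolding is_limmat_data_def by blast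
  have t: "\<bar>\<alpha> (\<kappa> i k) * \<beta> i k\<bar> \<le> \<bar>\<beta> i k\<bar>" if "k < N" "i \<noteq> k" for k
  proof -
    have h: "\<beta> i k \<le> 0" "0 \<le> \<alpha> (\<kappa> i k)" "\<alpha> (\<kappa> i k) \<le> 1" using b[OF that] by auto
    have "\<bar>\<alpha> (\<kappa> i k) * \<beta> i k\<bar> = \<alpha> (\<kappa> i k) * \<bar>\<beta> i k\<bar>" using h by (simp add: abs_mult)
    also have "\<dots> \<le> \<bar>\<beta> i k\<bar>" by (metis abs_ge_zero mult_left_le_one_le h(2) h(3))
    finally show ?thesis .
  qed
  show ?thesis
  proof (cases "i = j")
    case False thus ?thesis using t[OF j False] by (simp add: limmat_def ones_def)
  next
    case True
    have e1: "\<bar>limmat N \<beta> \<kappa> \<alpha> i j\<bar> = (\<Sum>k\<in>{..<N} - {i}. \<bar>\<alpha> (\<kappa> i k) * \<beta> i k\<bar>)"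
    proof -
      have "(\<Sum>k\<in>{..<N} - {i}. \<alpha> (\<kappa> i k) * \<beta> i k) = - (\<Sum>k\<in>{..<N} - {i}. \<bar>\<alpha> (\<kappa> i k) * \<beta> i k\<bar>)"
        unfolding sum_negf[symmetric]
        by (rule sum.cong) (use b in \<open>auto simp: abs_mult abs_of_nonneg abs_of_nonpos\<close>)
      thus ?thesis using True by (simp add: limmat_def)
    qed
    have e2: "\<bar>limmat N \<beta> \<kappa> ones i j\<bar> = (\<Sum>k\<in>{..<N} - {i}. \<bar>\<beta> i k\<bar>)"
    proof -
      have "(\<Sum>k\<in>{..<N} - {i}. ones (\<kappa> i k) * \<beta> i k) = - (\<Sum>k\<in>{..<N} - {i}. \<bar>\<beta> i k\<bar>)"
        unfolding sum_negf[symmetric]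
        by (rule sum.cong) (use b in \<open>auto simp: ones_def abs_of_nonpos\<close>)
      thus ?thesis using True by (simp add: limmat_def abs_of_nonneg sum_nonneg)
    qed
    show ?thesis unfolding e1 e2 by (rule sum_mono) (use t in auto)
  qed
qed

lemma mmul_diag: assumes "i < N" shows "mmul N (diagm d) B i j = d i * B i j"
proof -
  have "mmul N (diagm d) B i j = (\<Sum>k<N. if i = k then d i * B i j else 0)"
    unfolding mmul_def diagm_def by (rule sum.cong) auto
  thus ?thesis using assms by simp
qed

lemma mvec_diag: assumes "i < N" shows "mvec N (diagm d) y i = d i * y i"
proof -
  have "mvec N (diagm d) y i = (\<Sum>k<N. if i = k then d i * y i else 0)"
    unfolding mvec_def diagm_def by (rule sum.cong) auto
  thus ?thesis using assms by simp
qed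

lemma inj_invertible:
  assumes inj: "\<forall>y. (\<forall>i<N. mvec N C y i = 0) \<longrightarrow> (\<forall>i<N. y i = 0)"
  shows "invertible_mat N C"
proof -
  define A :: "real Matrix.mat" where "A = Matrix.mat N N (\<lambda>(i,j). C i j)"
  have Ac: "A \<in> carrier_mat N N" by (simp add: A_def)
  have "det A \<noteq> 0"
  proof
    assume "det A = 0"
    then obtain v where v: "v \<in> carrier_vec N" "v \<noteq> 0\<^sub>v N" "A *\<^sub>v v = 0\<^sub>v N"
      using det_0_iff_vec_prod_zero[OF Ac] by blast
    have "\<forall>i<N. mvec N C (\<lambda>k. v $ k) i = 0"
    proof (intro allI impI)
      fix i assume i: "i < N"
      have "(A *\<^sub>v v) $ i = 0" using v(3) i by simp
      moreover have "(A *\<^sub>v v) $ i = mvec N C (\<lambda>k. v $ k) i"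
        using i v(1) by (simp add: A_def mvec_def scalar_prod_def row_def atLeast0LessThan)
      ultimately show "mvec N C (\<lambda>k. v $ k) i = 0" by simp
    qed
    with inj have "\<forall>i<N. v $ i = 0" by blast
    hence "v = 0\<^sub>v N" using v(1) by (intro eq_vecI) auto
    with v(2) show False by simp
  qed
  from det_non_zero_imp_unit[OF Ac this, of "()"]
  obtain B where B: "B \<in> carrier_mat N N" "B * A = 1\<^sub>m N" "A * B = 1\<^sub>m N"
    unfolding Units_def by (auto simp: ring_mat_simps)
  show ?thesis unfolding invertible_mat_def
  proof (intro exI[of _ "\<lambda>i j. B $$ (i,j)"] allI impI conjI)
    fix i j assume i: "i < N" and j: "j < N"
    have "(A * B) $$ (i,j) = mmul N C (\<lambda>i j. B $$ (i, j)) i j"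
      using i j B(1) by (simp add: A_def mmul_def scalar_prod_def row_def col_def atLeast0LessThan)
    thus "mmul N C (\<lambda>i j. B $$ (i, j)) i j = idm i j" using B(3) i j by (simp add: idm_def)
    have "(B * A) $$ (i,j) = mmul N (\<lambda>i j. B $$ (i, j)) C i j"
      using i j B(1) by (simp add: A_def mmul_def scalar_prod_def row_def col_def atLeast0LessThan)
    thus "mmul N (\<lambda>i j. B $$ (i, j)) C i j = idm i j" using B(2) i j by (simp add: idm_def)
  qed
qed

theorem mainTheorem6:
  fixes N :: nat and An An1 :: mat and d :: vec
    and \<beta>n \<beta>n1 :: mat and \<kappa>n \<kappa>n1 :: "nat \<Rightarrow> nat \<Rightarrow> nat"
    and \<sigma> \<gamma> \<Delta>t :: real and s :: vec
  assumes N: "N \<ge> 1"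
    and MAn: "condM N An" and MAn1: "condM N An1"
    and dpos: "\<forall>i<N. d i > 0"
    and dA: "\<forall>j<N. (\<Sum>i<N. d i * An1 i j) \<ge> 0"
    and Bn: "is_limmat_data N \<beta>n \<kappa>n" and Bn1: "is_limmat_data N \<beta>n1 \<kappa>n1"
    and dB: "\<forall>\<alpha>. \<forall>j<N. (\<Sum>i<N. d i * limmat N \<beta>n1 \<kappa>n1 \<alpha> i j) = 0"
    and sig: "0 \<le> \<sigma>" "\<sigma> \<le> 1"
    and gam: "0 < \<gamma>" "\<gamma> < 1"
    and s_def: "\<forall>j. s j = d j + \<Delta>t * \<sigma> * (\<Sum>i<N. d i * An1 i j)"
    and dt: "\<Delta>t > 0"
    and cfl: "\<Delta>t * \<sigma> * mnorm1 N (mmul N (diagm d) (limmat N \<beta>n1 \<kappa>n1 ones))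
              \<le> \<gamma> * Min (s ` {..<N})"
  shows "\<forall>\<alpha>n \<alpha>n1 :: vec. (\<forall>k\<in>{1..N-1}. 0 \<le> \<alpha>n k \<and> \<alpha>n k \<le> 1) \<longrightarrow>
           (\<forall>k\<in>{1..N-1}. 0 \<le> \<alpha>n1 k \<and> \<alpha>n1 k \<le> 1) \<longrightarrow>
           invertible_mat N (madd idm (mscale (\<Delta>t * \<sigma>) (msub An1 (limmat N \<beta>n1 \<kappa>n1 \<alpha>n1)))) \<and>
           (\<forall>yn g y1 :: vec.
              (\<forall>i<N. mvec N (madd idm (mscale (\<Delta>t * \<sigma>) (msub An1 (limmat N \<beta>n1 \<kappa>n1 \<alpha>n1)))) y1 i
                 = mvec N (msub idm (mscale (\<Delta>t * (1 - \<sigma>)) (msub An (limmat N \<beta>n \<kappa>n \<alpha>n)))) yn i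
                   + \<Delta>t * g i) \<longrightarrow>
              vnorm1 N y1 \<le>
                (mnorm1 N (diagm d) / ((1 - \<gamma>) * Min (s ` {..<N}))) *
                ((mnorm1 N (msub idm (mscale (\<Delta>t * (1 - \<sigma>)) An))
                   + \<Delta>t * (1 - \<sigma>) * mnorm1 N (limmat N \<beta>n \<kappa>n ones)) * vnorm1 N yn
                 + \<Delta>t * vnorm1 N g))"

proof (intro allI impI conjI)
  fix \<alpha>n \<alpha>n1 :: vec
  assume an: "\<forall>k\<in>{1..N-1}. 0 \<le> \<alpha>n k \<and> \<alpha>n k \<le> 1"
     and an1: "\<forall>k\<in>{1..N-1}. 0 \<le> \<alpha>n1 k \<and> \<alpha>n1 k \<le> 1"
  define C where "C = madd idm (mscale (\<Delta>t * \<sigma>) (msub An1 (limmat N \<beta>n1 \<kappa>n1 \<alpha>n1)))"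
  define m where "m = Min (s ` {..<N})"
  have ts: "0 \<le> \<Delta>t * \<sigma>" using dt sig by simp
  have spos: "s j > 0" if "j < N" for j
  proof -
    have "0 \<le> \<Delta>t * \<sigma> * (\<Sum>i<N. d i * An1 i j)" using ts dA that by simp
    thus ?thesis using s_def dpos that by (simp add: add_pos_nonneg)
  qed
  have N0: "0 \<in> {..<N}" using N by simp
  have mpos: "m > 0" unfolding m_def using spos N0 by (subst Min_gr_iff) auto
  have sm: "m \<le> s j" if "j < N" for j unfolding m_def using that by (intro Min_le) auto
  have Dn: "0 \<le> mnorm1 N (diagm d)" using N by (rule mnorm_nonneg)
  have key: "(1 - \<gamma>) * m * vnorm1 N y \<le> mnorm1 N (diagm d) * vnorm1 N (mvec N C y)" for y
  proof -
    define K where "K = (\<lambda>i j. d i * (idm i j + \<Delta>t * \<sigma> * An1 i j))"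
    define Bd where "Bd = mmul N (diagm d) (limmat N \<beta>n1 \<kappa>n1 \<alpha>n1)"
    define B1 where "B1 = mmul N (diagm d) (limmat N \<beta>n1 \<kappa>n1 ones)"
    have dec: "mvec N (diagm d) (mvec N C y) i = mvec N K y i - \<Delta>t * \<sigma> * mvec N Bd y i"
      if i: "i < N" for i
    proof -
      have "mvec N (diagm d) (mvec N C y) i = d i * mvec N C y i" using i by (rule mvec_diag)
      also have "\<dots> = mvec N K y i - \<Delta>t * \<sigma> * mvec N Bd y i"
        using i by (simp add: mvec_def C_def K_def Bd_def mmul_diag madd_def mscale_def msub_def
            sum_distrib_left sum_subtractf[symmetric] algebra_simps)
      finally show ?thesis .
    qed
    have offK: "\<forall>i<N. \<forall>j<N. i \<noteq> j \<longrightarrow> K i j \<le> 0"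
    proof (intro allI impI)
      fix i j assume "i < N" "j < N" "i \<noteq> j"
      hence "An1 i j \<le> 0" "d i > 0" using MAn1 dpos unfolding condM_def by auto
      with ts show "K i j \<le> 0" using \<open>i \<noteq> j\<close>
        by (simp add: K_def idm_def mult_nonneg_nonpos mult_pos_neg mult_nonneg_nonpos2
            mult_le_0_iff)
    qed
    have colK: "(\<Sum>i<N. K i j) = s j" if "j < N" for j
    proof -
      have "(\<Sum>i<N. K i j) = (\<Sum>i<N. d i * idm i j) + \<Delta>t * \<sigma> * (\<Sum>i<N. d i * An1 i j)"
        by (simp add: K_def algebra_simps sum.distrib sum_distrib_left)
      also have "(\<Sum>i<N. d i * idm i j) = (\<Sum>i<N. if i = j then d j else 0)"
        by (rule sum.cong) (auto simp: idm_def)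
      finally show ?thesis using that s_def by simp
    qed
    have "m * vnorm1 N y \<le> (\<Sum>j<N. (\<Sum>i<N. K i j) * \<bar>y j\<bar>)"
      unfolding vnorm1_def sum_distrib_left
      by (rule sum_mono) (auto simp: colK sm intro: mult_right_mono)
    also have "\<dots> \<le> vnorm1 N (mvec N K y)" using offK by (rule Mmat_lower)
    also have "\<dots> \<le> vnorm1 N (mvec N (diagm d) (mvec N C y)) + \<Delta>t * \<sigma> * vnorm1 N (mvec N Bd y)"
    proof -
      have "vnorm1 N (mvec N K y) \<le> (\<Sum>i<N. \<bar>mvec N (diagm d) (mvec N C y) i\<bar> + \<Delta>t * \<sigma> * \<bar>mvec N Bd y i\<bar>)"
        unfolding vnorm1_def
      proof (rule sum_mono)
        fix i assume "i \<in> {..<N}"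
        hence "mvec N K y i = mvec N (diagm d) (mvec N C y) i + \<Delta>t * \<sigma> * mvec N Bd y i"
          using dec by simp
        thus "\<bar>mvec N K y i\<bar> \<le> \<bar>mvec N (diagm d) (mvec N C y) i\<bar> + \<Delta>t * \<sigma> * \<bar>mvec N Bd y i\<bar>"
          using ts abs_triangle_ineq[of "mvec N (diagm d) (mvec N C y) i" "\<Delta>t * \<sigma> * mvec N Bd y i"] dt sig by (simp add: abs_mult)
      qed
      thus ?thesis by (simp add: vnorm1_def sum.distrib sum_distrib_left)
    qed
    also have "\<dots> \<le> mnorm1 N (diagm d) * vnorm1 N (mvec N C y) + \<Delta>t * \<sigma> * (mnorm1 N B1 * vnorm1 N y)"
    proof (rule add_mono[OF mvec_norm mult_left_mono[OF _ ts]])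
      have "mnorm1 N Bd \<le> mnorm1 N B1"
      proof (rule mnorm_mono[OF N], intro allI impI)
        fix i j assume "i < N" "j < N"
        thus "\<bar>Bd i j\<bar> \<le> \<bar>B1 i j\<bar>" using limmat_bound[OF Bn1 an1, of i j] dpos
          by (simp add: Bd_def B1_def mmul_diag abs_mult mult_left_mono)
      qed
      thus "vnorm1 N (mvec N Bd y) \<le> mnorm1 N B1 * vnorm1 N y"
        by (rule order_trans[OF mvec_norm mult_right_mono[OF _ vnorm_nonneg]])
    qed
    also have "\<Delta>t * \<sigma> * (mnorm1 N B1 * vnorm1 N y) \<le> \<gamma> * m * vnorm1 N y"
      using mult_right_mono[OF cfl vnorm_nonneg, of N y] by (simp add: B1_def m_def mult.assoc)
    finally show ?thesis by (simp add: algebra_simps)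
  qed
  show "invertible_mat N (madd idm (mscale (\<Delta>t * \<sigma>) (msub An1 (limmat N \<beta>n1 \<kappa>n1 \<alpha>n1))))"
    unfolding C_def[symmetric]
  proof (rule inj_invertible, rule allI, rule impI)
    fix y assume z: "\<forall>i<N. mvec N C y i = 0"
    have "vnorm1 N (mvec N C y) = 0" using z by (simp add: vnorm1_def)
    with key[of y] have "(1 - \<gamma>) * m * vnorm1 N y \<le> 0" by simp
    moreover have "(1 - \<gamma>) * m > 0" using gam mpos by simp
    ultimately have "vnorm1 N y \<le> 0" by (meson not_le mult_pos_pos)
    hence "vnorm1 N y = 0" using vnorm_nonneg[of N y] by simp
    hence "\<forall>i\<in>{..<N}. \<bar>y i\<bar> = 0" unfolding vnorm1_def by (subst (asm) sum_nonneg_eq_0_iff) auto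
    thus "\<forall>i<N. y i = 0" by simp
  qed
  fix yn g y1 :: vec
  assume eq: "\<forall>i<N. mvec N (madd idm (mscale (\<Delta>t * \<sigma>) (msub An1 (limmat N \<beta>n1 \<kappa>n1 \<alpha>n1)))) y1 i
                 = mvec N (msub idm (mscale (\<Delta>t * (1 - \<sigma>)) (msub An (limmat N \<beta>n \<kappa>n \<alpha>n)))) yn i
                   + \<Delta>t * g i"
  define c where "c = \<Delta>t * (1 - \<sigma>)"
  have c0: "0 \<le> c" using dt sig by (simp add: c_def)
  define R where "R = msub idm (mscale c An)"
  define Ba where "Ba = limmat N \<beta>n \<kappa>n \<alpha>n"
  define M1 where "M1 = mnorm1 N R + c * mnorm1 N (limmat N \<beta>n \<kappa>n ones)"
  have CY: "vnorm1 N (mvec N C y1) \<le> M1 * vnorm1 N yn + \<Delta>t * vnorm1 N g"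
  proof -
    have "vnorm1 N (mvec N C y1) \<le> (\<Sum>i<N. \<bar>mvec N R yn i\<bar> + c * \<bar>mvec N Ba yn i\<bar> + \<Delta>t * \<bar>g i\<bar>)"
      unfolding vnorm1_def
    proof (rule sum_mono)
      fix i assume "i \<in> {..<N}"
      hence e1: "mvec N C y1 i = mvec N (msub idm (mscale c (msub An Ba))) yn i + \<Delta>t * g i"
        using eq by (simp add: C_def[symmetric] Ba_def c_def)
      have "mvec N (msub idm (mscale c (msub An Ba))) yn i
          = (\<Sum>k<N. (idm i k - c * An i k) * yn k + c * (Ba i k * yn k))"
        unfolding mvec_def msub_def mscale_def by (rule sum.cong) (auto simp: algebra_simps)
      also have "\<dots> = mvec N R yn i + c * mvec N Ba yn i"
        by (simp add: sum.distrib sum_distrib_left R_def mvec_def msub_def mscale_def)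
      finally have ey: "mvec N C y1 i = mvec N R yn i + c * mvec N Ba yn i + \<Delta>t * g i" using e1 by simp
      thus "\<bar>mvec N C y1 i\<bar> \<le> \<bar>mvec N R yn i\<bar> + c * \<bar>mvec N Ba yn i\<bar> + \<Delta>t * \<bar>g i\<bar>"
      proof -
        have "\<bar>mvec N R yn i + c * mvec N Ba yn i + \<Delta>t * g i\<bar>
           \<le> \<bar>mvec N R yn i\<bar> + \<bar>c * mvec N Ba yn i\<bar> + \<bar>\<Delta>t * g i\<bar>"
          by (rule order_trans[OF abs_triangle_ineq add_right_mono[OF abs_triangle_ineq]])
        thus ?thesis using c0 dt ey by (simp add: abs_mult)
      qed
    qed
    also have "\<dots> = vnorm1 N (mvec N R yn) + c * vnorm1 N (mvec N Ba yn) + \<Delta>t * vnorm1 N g"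
      by (simp add: vnorm1_def sum.distrib sum_distrib_left)
    also have "\<dots> \<le> mnorm1 N R * vnorm1 N yn + c * (mnorm1 N (limmat N \<beta>n \<kappa>n ones) * vnorm1 N yn) + \<Delta>t * vnorm1 N g"
    proof -
      have "mnorm1 N Ba \<le> mnorm1 N (limmat N \<beta>n \<kappa>n ones)"
        by (rule mnorm_mono[OF N]) (use limmat_bound[OF Bn an] in \<open>auto simp: Ba_def\<close>)
      hence "vnorm1 N (mvec N Ba yn) \<le> mnorm1 N (limmat N \<beta>n \<kappa>n ones) * vnorm1 N yn"
        by (rule order_trans[OF mvec_norm mult_right_mono[OF _ vnorm_nonneg]])
      hence "c * vnorm1 N (mvec N Ba yn) \<le> c * (mnorm1 N (limmat N \<beta>n \<kappa>n ones) * vnorm1 N yn)"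
        using c0 by (rule mult_left_mono)
      thus ?thesis using mvec_norm[of N R yn] by linarith
    qed
    finally show ?thesis by (simp add: M1_def algebra_simps)
  qed
  have pos: "(1 - \<gamma>) * m > 0" using gam mpos by simp
  have "vnorm1 N y1 \<le> mnorm1 N (diagm d) * vnorm1 N (mvec N C y1) / ((1 - \<gamma>) * m)"
    using key[of y1] pos by (simp add: pos_le_divide_eq mult.commute)
  also have "\<dots> \<le> mnorm1 N (diagm d) * (M1 * vnorm1 N yn + \<Delta>t * vnorm1 N g) / ((1 - \<gamma>) * m)"
    using pos Dn CY by (intro divide_right_mono mult_left_mono) auto
  finally show "vnorm1 N y1 \<le>
                (mnorm1 N (diagm d) / ((1 - \<gamma>) * Min (s ` {..<N}))) *
                ((mnorm1 N (msub idm (mscale (\<Delta>t * (1 - \<sigma>)) An))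
                   + \<Delta>t * (1 - \<sigma>) * mnorm1 N (limmat N \<beta>n \<kappa>n ones)) * vnorm1 N yn
                 + \<Delta>t * vnorm1 N g)"
    by (simp add: M1_def R_def c_def m_def)
qed

end
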